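(* For any nonnegative integers $j_1,j_2,l,k$ with $j_1+j_2-k\ge 1$, there is a constant $C$ (independent of $b$) such that for all $b\in H^{j_1+j_2-k-\frac12}(\mathbb{T})$, $$\|b^{\sharp}\|_{L^2(\Omega)}+ \|\rho^{k+l}\, \partial_\theta^{j_1} \partial^{j_2+l}_{R}\, b^{\sharp}\|_{L^2(\Omega)} \leq C \|b\|_{H^{j_1+j_2-k-\frac12}(\mathbb{T})}.$$ The function $B^\flat$ satisfies the analogous estimate (with $b^\sharp,b$ replaced by $B^\flat,B$).
   Context: $\mathbb{T}:=\mathbb{R}/2\pi\mathbb{Z}$. $\Omega:=\{(R,\theta)\in(1,7)\times\mathbb{T}\}$; the $L^2(\Omega)$ norm is taken with the measure $dR\,d\theta$. $\rho(R):=\frac16(R-1)(7-R)$. Fix an even cutoff $\widetilde\chi\in C^\infty(\mathbb{R})$ with $\widetilde\chi(s)=1$ if $|s|<\frac12$ and $\widetilde\chi(s)=0$ if $|s|>1$. For functions $b,B$ on $\mathbb{T}$ with Fourier coefficients $b_n,B_n$ (i.e. $b_n=\frac1{2\pi}\int_0^{2\pi}b(\theta)e^{-in\theta}d\theta$, similarly $B_n$), define $b^\sharp(R,\theta):=\sum_{n\in\mathbb{Z}} b_n e^{in\theta}\widetilde\chi((1+|n|)(R-1))$ and $B^\flat(R,\theta):=\sum_{n\in\mathbb{Z}} B_n e^{in\theta}\widetilde\chi((1+|n|)(R-7))$. *)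

theory Defs
  imports "HOL-Analysis.Analysis"
begin

definition fcoeff :: "(real \<Rightarrow> complex) \<Rightarrow> int \<Rightarrow> complex" where
  "fcoeff b n = (LINT \<theta>:{0..2*pi}|lborel. exp (- (\<i> * of_int n * of_real \<theta>)) * b \<theta>) / (2 * pi)"

definition in_Hs :: "real \<Rightarrow> (real \<Rightarrow> complex) \<Rightarrow> bool" where
  "in_Hs s b \<longleftrightarrow> b \<in> borel_measurable borel \<and>
     (\<integral>\<^sup>+ \<theta>\<in>{0..2*pi}. ennreal ((cmod (b \<theta>))\<^sup>2) \<partial>lborel) < \<infinity> \<and>
     (\<lambda>n::int. (1 + (real_of_int n)\<^sup>2) powr s * (cmod (fcoeff b n))\<^sup>2) summable_on UNIV"

definition Hs_norm :: "real \<Rightarrow> (real \<Rightarrow> complex) \<Rightarrow> real" where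
  "Hs_norm s b = sqrt (\<Sum>\<^sub>\<infinity>n::int. (1 + (real_of_int n)\<^sup>2) powr s * (cmod (fcoeff b n))\<^sup>2)"

definition rho :: "real \<Rightarrow> real" where
  "rho R = (1/6) * (R - 1) * (7 - R)"

definition bsharp :: "(real \<Rightarrow> real) \<Rightarrow> (real \<Rightarrow> complex) \<Rightarrow> real \<times> real \<Rightarrow> complex" where
  "bsharp chi b = (\<lambda>(R, \<theta>). \<Sum>\<^sub>\<infinity>n::int. fcoeff b n * exp (\<i> * of_int n * of_real \<theta>)
      * of_real (chi ((1 + \<bar>real_of_int n\<bar>) * (R - 1))))"

definition Bflat :: "(real \<Rightarrow> real) \<Rightarrow> (real \<Rightarrow> complex) \<Rightarrow> real \<times> real \<Rightarrow> complex" where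
  "Bflat chi B = (\<lambda>(R, \<theta>). \<Sum>\<^sub>\<infinity>n::int. fcoeff B n * exp (\<i> * of_int n * of_real \<theta>)
      * of_real (chi ((1 + \<bar>real_of_int n\<bar>) * (R - 7))))"

definition dR :: "(real \<times> real \<Rightarrow> complex) \<Rightarrow> real \<times> real \<Rightarrow> complex" where
  "dR f = (\<lambda>(R, \<theta>). vector_derivative (\<lambda>r. f (r, \<theta>)) (at R))"

definition dTheta :: "(real \<times> real \<Rightarrow> complex) \<Rightarrow> real \<times> real \<Rightarrow> complex" where
  "dTheta f = (\<lambda>(R, \<theta>). vector_derivative (\<lambda>t. f (R, t)) (at \<theta>))"

definition Omega :: "(real \<times> real) set" where
  "Omega = {1<..<7} \<times> {0..<2*pi}"

definition L2norm :: "(real \<times> real \<Rightarrow> complex) \<Rightarrow> ennreal" where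
  "L2norm f = (let I = (\<integral>\<^sup>+ x\<in>Omega. ennreal ((cmod (f x))\<^sup>2) \<partial>lborel)
               in if I = \<infinity> then \<infinity> else ennreal (sqrt (enn2real I)))"

end

theory Submission
  imports Defs "HOL-Library.Nat_Bijection"
begin


lemma Dzero:
  fixes chi :: "real \<Rightarrow> real"
  assumes zero: "\<And>s. \<bar>s\<bar> > 1 \<Longrightarrow> chi s = 0"
  shows "\<bar>s\<bar> > 1 \<Longrightarrow> (deriv ^^ m) chi s = 0"
proof (induction m arbitrary: s)
  case 0 then show ?case using zero by simp
next
  case (Suc m)
  have "((\<lambda>_. 0) has_field_derivative 0) (at s)" by simp
  then have "((deriv ^^ m) chi has_field_derivative 0) (at s)"
    by (rule has_field_derivative_transform_within_open[where S="{s. \<bar>s\<bar> > 1}"])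
       (use Suc in \<open>auto intro!: open_Collect_less continuous_intros\<close>)
  then show ?case by (simp add: DERIV_imp_deriv)
qed

lemma Dderiv:
  fixes chi :: "real \<Rightarrow> real"
  assumes smooth: "\<And>m x. ((deriv ^^ m) chi) differentiable (at x)"
  shows "((deriv ^^ m) chi has_real_derivative (deriv ^^ Suc m) chi x) (at x)"
  using smooth[of m x] by (simp add: DERIV_deriv_iff_real_differentiable)

lemma Dbound:
  fixes chi :: "real \<Rightarrow> real"
  assumes smooth: "\<And>m x. ((deriv ^^ m) chi) differentiable (at x)"
  assumes zero: "\<And>s. \<bar>s\<bar> > 1 \<Longrightarrow> chi s = 0"
  shows "\<exists>M. \<forall>s. \<bar>(deriv ^^ m) chi s\<bar> \<le> M"
proof -
  have "continuous_on {-1..1} ((deriv ^^ m) chi)"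
    using smooth by (meson continuous_at_imp_continuous_on differentiable_imp_continuous_within)
  then have "compact (((deriv ^^ m) chi) ` {-1..1})"
    by (rule compact_continuous_image) simp
  then obtain M where M: "\<forall>y\<in>((deriv ^^ m) chi) ` {-1..1}. norm y \<le> M"
    using compact_imp_bounded bounded_iff by metis
  show ?thesis
  proof (intro exI allI)
    fix s
    show "\<bar>(deriv ^^ m) chi s\<bar> \<le> M"
    proof (cases "\<bar>s\<bar> > 1")
      case True then show ?thesis using Dzero[OF zero True] M by force
    next
      case False then have "s \<in> {-1..1}" by auto
      then show ?thesis using M by auto
    qed
  qed
qed

definition gt :: "(real \<Rightarrow> real) \<Rightarrow> real \<Rightarrow> (int \<Rightarrow> complex) \<Rightarrow> nat \<Rightarrow> real \<times> real \<Rightarrow> complex" where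
  "gt chi c a m = (\<lambda>(R, \<theta>). \<Sum>\<^sub>\<infinity>n::int. a n * exp (\<i> * of_int n * of_real \<theta>)
      * of_real ((1 + \<bar>real_of_int n\<bar>) ^ m * (deriv ^^ m) chi ((1 + \<bar>real_of_int n\<bar>) * (R - c))))"

lemma supp_zero:
  fixes chi :: "real \<Rightarrow> real"
  assumes zero: "\<And>s. \<bar>s\<bar> > 1 \<Longrightarrow> chi s = 0"
    and d: "d > 0" "\<bar>r - c\<bar> \<ge> d" and n: "n \<notin> {-\<lceil>1/d\<rceil>..\<lceil>1/d\<rceil>}"
  shows "(deriv ^^ m) chi ((1 + \<bar>real_of_int n\<bar>) * (r - c)) = 0"
proof (rule Dzero[OF zero])
  have "\<bar>n\<bar> > \<lceil>1/d\<rceil>" using n by auto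
  then have "\<bar>real_of_int n\<bar> \<ge> 1/d"
    by (metis (no_types, opaque_lifting) le_of_int_ceiling less_le of_int_abs of_int_less_iff order_trans)
  then have "\<bar>real_of_int n\<bar> * d \<ge> 1" using d by (simp add: field_simps)
  moreover have "(1 + \<bar>real_of_int n\<bar>) * \<bar>r - c\<bar> \<ge> (1 + \<bar>real_of_int n\<bar>) * d"
    using d by (intro mult_left_mono) auto
  ultimately have "(1 + \<bar>real_of_int n\<bar>) * \<bar>r - c\<bar> > 1" using d by (simp add: algebra_simps)
  then show "\<bar>(1 + \<bar>real_of_int n\<bar>) * (r - c)\<bar> > 1" by (simp add: abs_mult)
qed

lemma infsum_fin:
  fixes f :: "int \<Rightarrow> complex"
  assumes "finite S" "\<And>n. n \<notin> S \<Longrightarrow> f n = 0"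
  shows "(\<Sum>\<^sub>\<infinity>n. f n) = (\<Sum>n\<in>S. f n)"
proof -
  have "(\<Sum>\<^sub>\<infinity>n. f n) = (\<Sum>\<^sub>\<infinity>n\<in>S. f n)"
    by (rule infsum_cong_neutral) (use assms in auto)
  also have "\<dots> = (\<Sum>n\<in>S. f n)" using assms(1) by simp
  finally show ?thesis .
qed

lemma gt_fin:
  fixes chi :: "real \<Rightarrow> real"
  assumes zero: "\<And>s. \<bar>s\<bar> > 1 \<Longrightarrow> chi s = 0"
    and d: "d > 0" "\<bar>r - c\<bar> \<ge> d"
  shows "gt chi c a m (r, t) = (\<Sum>n\<in>{-\<lceil>1/d\<rceil>..\<lceil>1/d\<rceil>}. a n * exp (\<i> * of_int n * of_real t)
      * of_real ((1 + \<bar>real_of_int n\<bar>) ^ m * (deriv ^^ m) chi ((1 + \<bar>real_of_int n\<bar>) * (r - c))))"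
  unfolding gt_def by (simp, rule infsum_fin) (use supp_zero[OF zero d] in auto)


lemma exp_vd: "((\<lambda>t::real. exp (\<i> * of_int n * of_real t)) has_vector_derivative
    (\<i> * of_int n * exp (\<i> * of_int n * of_real t))) (at t)"
proof -
  have "((\<lambda>z. exp (\<i> * of_int n * z)) has_field_derivative (exp (\<i> * of_int n * of_real t) * (\<i> * of_int n))) (at (of_real t))"
    by (auto intro!: derivative_eq_intros)
  from has_vector_derivative_real_field[OF this] show ?thesis by (simp add: mult.commute)
qed

lemma gt_dR:
  fixes chi :: "real \<Rightarrow> real"
  assumes smooth: "\<And>m x. ((deriv ^^ m) chi) differentiable (at x)"
    and zero: "\<And>s. \<bar>s\<bar> > 1 \<Longrightarrow> chi s = 0"
    and R: "R \<noteq> c"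
  shows "((\<lambda>r. gt chi c a m (r, t)) has_vector_derivative gt chi c a (Suc m) (R, t)) (at R)"
proof -
  define d where "d = \<bar>R - c\<bar> / 2"
  have d: "d > 0" using R by (simp add: d_def)
  define I where "I = {-\<lceil>1/d\<rceil>..\<lceil>1/d\<rceil>}"
  define K where "K = (\<lambda>n::int. 1 + \<bar>real_of_int n\<bar>)"
  have "((\<lambda>r. \<Sum>n\<in>I. a n * exp (\<i> * of_int n * of_real t)
      * of_real (K n ^ m * (deriv ^^ m) chi (K n * (r - c)))) has_vector_derivative
      (\<Sum>n\<in>I. a n * exp (\<i> * of_int n * of_real t)
      * of_real (K n ^ Suc m * (deriv ^^ Suc m) chi (K n * (R - c))))) (at R)"
  proof (rule has_vector_derivative_sum)
    fix n assume "n \<in> I"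
    have i: "((\<lambda>r. K n * (r - c)) has_real_derivative K n) (at R)"
      by (auto intro!: derivative_eq_intros)
    have "((\<lambda>r. (deriv ^^ m) chi (K n * (r - c))) has_real_derivative
        (deriv ^^ Suc m) chi (K n * (R - c)) * K n) (at R)"
      by (rule DERIV_chain2[OF Dderiv[OF smooth] i])
    then have "((\<lambda>r. K n ^ m * (deriv ^^ m) chi (K n * (r - c))) has_real_derivative
        K n ^ Suc m * (deriv ^^ Suc m) chi (K n * (R - c))) (at R)"
      by (auto intro!: derivative_eq_intros simp: algebra_simps)
    from has_vector_derivative_of_real[OF this]
    show "((\<lambda>r. a n * exp (\<i> * of_int n * of_real t)
      * of_real (K n ^ m * (deriv ^^ m) chi (K n * (r - c)))) has_vector_derivative
      a n * exp (\<i> * of_int n * of_real t)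
      * of_real (K n ^ Suc m * (deriv ^^ Suc m) chi (K n * (R - c)))) (at R)"
      by (rule has_vector_derivative_mult_right)
  qed
  then have "((\<lambda>r. \<Sum>n\<in>I. a n * exp (\<i> * of_int n * of_real t)
      * of_real (K n ^ m * (deriv ^^ m) chi (K n * (r - c)))) has_vector_derivative
      gt chi c a (Suc m) (R, t)) (at R)"
    using gt_fin[OF zero d, where r=R and c=c and a=a and m="Suc m" and t=t] by (simp add: I_def K_def d_def)
  then show ?thesis
  proof (rule has_vector_derivative_transform_within_open[where S="{r. \<bar>r - c\<bar> > d}"])
    show "open {r. \<bar>r - c\<bar> > d}" by (intro open_Collect_less continuous_intros)
    show "R \<in> {r. \<bar>r - c\<bar> > d}" using d by (simp add: d_def)
    fix r assume "r \<in> {r. \<bar>r - c\<bar> > d}"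
    then show "(\<Sum>n\<in>I. a n * exp (\<i> * of_int n * of_real t)
      * of_real (K n ^ m * (deriv ^^ m) chi (K n * (r - c)))) = gt chi c a m (r, t)"
      using gt_fin[OF zero d, where r=r and c=c and a=a and m=m and t=t] by (simp add: I_def K_def)
  qed
qed

lemma dR_iter:
  fixes chi :: "real \<Rightarrow> real"
  assumes smooth: "\<And>m x. ((deriv ^^ m) chi) differentiable (at x)"
    and zero: "\<And>s. \<bar>s\<bar> > 1 \<Longrightarrow> chi s = 0"
    and f: "\<And>R t. R \<noteq> c \<Longrightarrow> f (R, t) = gt chi c a 0 (R, t)"
  shows "R \<noteq> c \<Longrightarrow> (dR ^^ m) f (R, t) = gt chi c a m (R, t)"
proof (induction m arbitrary: R t)
  case 0 then show ?case using f by simp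
next
  case (Suc m)
  have hv: "((\<lambda>r. (dR ^^ m) f (r, t)) has_vector_derivative gt chi c a (Suc m) (R, t)) (at R)"
    by (rule has_vector_derivative_transform_within_open[OF gt_dR[OF smooth zero Suc.prems],
          where S="{r. r \<noteq> c}"]) (use Suc in \<open>auto simp: open_Collect_neq\<close>)
  have dRe: "\<And>h. dR h (R, t) = vector_derivative (\<lambda>r. h (r, t)) (at R)" by (simp add: dR_def)
  show ?case using dRe[of "(dR ^^ m) f"] vector_derivative_at[OF hv] by simp
qed

lemma gt_dT:
  fixes chi :: "real \<Rightarrow> real"
  assumes zero: "\<And>s. \<bar>s\<bar> > 1 \<Longrightarrow> chi s = 0"
    and R: "R \<noteq> c"
  shows "((\<lambda>t. gt chi c a m (R, t)) has_vector_derivative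
     gt chi c (\<lambda>n. \<i> * of_int n * a n) m (R, t)) (at t)"
proof -
  define d where "d = \<bar>R - c\<bar>"
  have d: "d > 0" "\<bar>R - c\<bar> \<ge> d" using R by (auto simp: d_def)
  define I where "I = {-\<lceil>1/d\<rceil>..\<lceil>1/d\<rceil>}"
  define K where "K = (\<lambda>n::int. 1 + \<bar>real_of_int n\<bar>)"
  have e: "(\<lambda>t. gt chi c a m (R, t)) = (\<lambda>t. \<Sum>n\<in>I. a n * exp (\<i> * of_int n * of_real t)
      * of_real (K n ^ m * (deriv ^^ m) chi (K n * (R - c))))"
    using gt_fin[OF zero d, where a=a and m=m] by (simp add: I_def K_def)
  have "((\<lambda>t. \<Sum>n\<in>I. a n * exp (\<i> * of_int n * of_real t)
      * of_real (K n ^ m * (deriv ^^ m) chi (K n * (R - c)))) has_vector_derivative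
      (\<Sum>n\<in>I. (\<i> * of_int n * a n) * exp (\<i> * of_int n * of_real t)
      * of_real (K n ^ m * (deriv ^^ m) chi (K n * (R - c))))) (at t)"
  proof (rule has_vector_derivative_sum)
    fix n assume "n \<in> I"
    from has_vector_derivative_mult_left[OF has_vector_derivative_mult_right[OF exp_vd[of n t], of "a n"],
       of "of_real (K n ^ m * (deriv ^^ m) chi (K n * (R - c)))"]
    show "((\<lambda>t. a n * exp (\<i> * of_int n * of_real t)
      * of_real (K n ^ m * (deriv ^^ m) chi (K n * (R - c)))) has_vector_derivative
      (\<i> * of_int n * a n) * exp (\<i> * of_int n * of_real t)
      * of_real (K n ^ m * (deriv ^^ m) chi (K n * (R - c)))) (at t)"
      by (simp add: ac_simps)
  qed
  then show ?thesis unfolding e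
    using gt_fin[OF zero d, where a="\<lambda>n. \<i> * of_int n * a n" and m=m and t=t] by (simp add: I_def K_def)
qed

lemma dT_iter:
  fixes chi :: "real \<Rightarrow> real"
  assumes zero: "\<And>s. \<bar>s\<bar> > 1 \<Longrightarrow> chi s = 0"
    and g: "\<And>R t. R \<noteq> c \<Longrightarrow> g (R, t) = gt chi c a m (R, t)"
  shows "R \<noteq> c \<Longrightarrow> (dTheta ^^ j) g (R, t) = gt chi c (\<lambda>n. (\<i> * of_int n) ^ j * a n) m (R, t)"
proof (induction j arbitrary: R t)
  case 0 then show ?case using g by simp
next
  case (Suc j)
  have e: "(\<lambda>s. (dTheta ^^ j) g (R, s)) = (\<lambda>s. gt chi c (\<lambda>n. (\<i> * of_int n) ^ j * a n) m (R, s))"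
    using Suc by auto
  have hv: "((\<lambda>s. (dTheta ^^ j) g (R, s)) has_vector_derivative
      gt chi c (\<lambda>n. \<i> * of_int n * ((\<i> * of_int n) ^ j * a n)) m (R, t)) (at t)"
    unfolding e by (rule gt_dT[OF zero Suc.prems])
  have dTe: "\<And>h. dTheta h (R, t) = vector_derivative (\<lambda>s. h (R, s)) (at t)" by (simp add: dTheta_def)
  show ?case using dTe[of "(dTheta ^^ j) g"] vector_derivative_at[OF hv] by (simp add: mult.assoc)
qed



lemma expint: "((\<lambda>\<theta>::real. exp (\<i> * of_int k * of_real \<theta>)) has_integral (if k = 0 then of_real (2*pi) else 0)) {0..2*pi}"
proof (cases "k = 0")
  case True
  have "((\<lambda>\<theta>::real. 1::complex) has_integral (of_real (2*pi) - of_real 0)) {0..2*pi}"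
    by (rule fundamental_theorem_of_calculus[where f="\<lambda>x. of_real x"]) (auto intro!: derivative_eq_intros)
  then show ?thesis using True by simp
next
  case False
  define F where "F = (\<lambda>\<theta>::real. exp (\<i> * of_int k * of_real \<theta>) / (\<i> * of_int k))"
  have "((\<lambda>\<theta>::real. exp (\<i> * of_int k * of_real \<theta>)) has_integral (F (2*pi) - F 0)) {0..2*pi}"
  proof (rule fundamental_theorem_of_calculus)
    fix x :: real
    have "((\<lambda>z. exp (\<i> * of_int k * z) / (\<i> * of_int k)) has_field_derivative exp (\<i> * of_int k * of_real x)) (at (of_real x))"
      using False by (auto intro!: derivative_eq_intros)
    from has_vector_derivative_real_field[OF this]
    show "(F has_vector_derivative exp (\<i> * of_int k * of_real x)) (at x within {0..2*pi})"
      unfolding F_def .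
  qed simp
  moreover have "exp (\<i> * of_int k * of_real (2*pi)) = 1"
    using exp_integer_2pi[of "of_int k"] by (simp add: ac_simps)
  ultimately show ?thesis using False by (simp add: F_def)
qed

lemma inner_int:
  fixes c :: "int \<Rightarrow> complex"
  assumes S: "finite S"
  shows "((\<lambda>\<theta>. (cmod (\<Sum>n\<in>S. c n * exp (\<i> * of_int n * of_real \<theta>)))\<^sup>2) has_integral
     (2*pi * (\<Sum>n\<in>S. (cmod (c n))\<^sup>2))) {0..2*pi}"
proof -
  define h where "h = (\<lambda>\<theta>::real. \<Sum>n\<in>S. c n * exp (\<i> * of_int n * of_real \<theta>))"
  have e: "complex_of_real ((cmod (h \<theta>))\<^sup>2) = (\<Sum>n\<in>S. \<Sum>m\<in>S. c n * cnj (c m) * exp (\<i> * of_int (n - m) * of_real \<theta>))" for \<theta>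
  proof -
    have "complex_of_real ((cmod (h \<theta>))\<^sup>2) = h \<theta> * cnj (h \<theta>)" by (rule complex_norm_square)
    also have "\<dots> = (\<Sum>n\<in>S. \<Sum>m\<in>S. (c n * exp (\<i> * of_int n * of_real \<theta>)) * cnj (c m * exp (\<i> * of_int m * of_real \<theta>)))"
      unfolding h_def by (simp add: sum_product cnj_sum)
    also have "\<dots> = (\<Sum>n\<in>S. \<Sum>m\<in>S. c n * cnj (c m) * exp (\<i> * of_int (n - m) * of_real \<theta>))"
    proof (intro sum.cong refl)
      fix n m
      have "cnj (exp (\<i> * of_int m * of_real \<theta>)) = exp (- (\<i> * of_int m * of_real \<theta>))"
        by (subst exp_cnj) simp
      then show "(c n * exp (\<i> * of_int n * of_real \<theta>)) * cnj (c m * exp (\<i> * of_int m * of_real \<theta>)) =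
          c n * cnj (c m) * exp (\<i> * of_int (n - m) * of_real \<theta>)"
        by (simp add: exp_add[symmetric] algebra_simps exp_diff)
    qed
    finally show ?thesis .
  qed
  have "((\<lambda>\<theta>. \<Sum>n\<in>S. \<Sum>m\<in>S. c n * cnj (c m) * exp (\<i> * of_int (n - m) * of_real \<theta>)) has_integral
      (\<Sum>n\<in>S. \<Sum>m\<in>S. c n * cnj (c m) * (if n - m = 0 then of_real (2*pi) else 0))) {0..2*pi}"
    by (intro has_integral_sum S has_integral_mult_right expint)
  also have "(\<Sum>n\<in>S. \<Sum>m\<in>S. c n * cnj (c m) * (if n - m = 0 then of_real (2*pi) else 0))
      = (\<Sum>n\<in>S. c n * cnj (c n) * of_real (2*pi))"
    using S by (simp add: if_distrib[of "\<lambda>x. _ * x"] sum.If_cases)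
  also have "\<dots> = complex_of_real (2*pi * (\<Sum>n\<in>S. (cmod (c n))\<^sup>2))"
    by (simp add: sum_distrib_left sum_distrib_right mult.assoc flip: complex_norm_square, simp add: ac_simps)
  finally have "((\<lambda>\<theta>. complex_of_real ((cmod (h \<theta>))\<^sup>2)) has_integral complex_of_real (2*pi * (\<Sum>n\<in>S. (cmod (c n))\<^sup>2))) {0..2*pi}"
    unfolding e .
  from has_integral_linear[OF this bounded_linear_Re] show ?thesis
    by (simp add: o_def h_def)
qed



lemma Omega_borel: "Omega \<in> sets (borel \<Otimes>\<^sub>M borel)"
  unfolding Omega_def by (intro pair_measureI) auto

lemma meas_T:
  fixes a :: "int \<Rightarrow> complex" and \<phi> :: "int \<Rightarrow> real \<Rightarrow> real"
  assumes meas: "\<And>n. \<phi> n \<in> borel_measurable borel"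
  shows "(\<lambda>x::real\<times>real. indicator Omega x * (cmod (\<Sum>n\<in>I. a n * exp (\<i> * of_int n * of_real (snd x)) * of_real (\<phi> n (fst x))))\<^sup>2) \<in> borel_measurable (borel \<Otimes>\<^sub>M borel)"
  using Omega_borel meas by measurable



lemma inner_nn:
  fixes c :: "int \<Rightarrow> complex"
  assumes S: "finite S"
  shows "(\<integral>\<^sup>+ \<theta>. ennreal ((cmod (\<Sum>n\<in>S. c n * exp (\<i> * of_int n * of_real \<theta>)))\<^sup>2) * indicator {0..<2*pi} \<theta> \<partial>lborel)
     = ennreal (2*pi * (\<Sum>n\<in>S. (cmod (c n))\<^sup>2))"
proof (rule nn_integral_has_integral_lebesgue')
  show "((\<lambda>\<theta>. (cmod (\<Sum>n\<in>S. c n * exp (\<i> * of_int n * of_real \<theta>)))\<^sup>2) has_integral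
     (2*pi * (\<Sum>n\<in>S. (cmod (c n))\<^sup>2))) {0..<2*pi}"
    using inner_int[OF S, of c]
    by (subst has_integral_spike_set_eq[where T="{0..2*pi}"])
       (auto intro: negligible_subset[of "{2*pi}"])
qed simp


lemma parseval_bound:
  fixes a :: "int \<Rightarrow> complex" and \<phi> :: "int \<Rightarrow> real \<Rightarrow> real" and w :: "int \<Rightarrow> real"
    and F :: "real \<times> real \<Rightarrow> complex"
  assumes meas: "\<And>n. \<phi> n \<in> borel_measurable borel"
    and fin: "\<And>R. R \<in> {1<..<7} \<Longrightarrow> \<exists>N::nat. \<forall>n. n \<notin> {-int N..int N} \<longrightarrow> \<phi> n R = 0"
    and bnd: "\<And>n. ennreal ((cmod (a n))\<^sup>2) * (\<integral>\<^sup>+ R. ennreal ((\<phi> n R)\<^sup>2) * indicator {1<..<7} R \<partial>lborel) \<le> ennreal (w n)"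
    and w0: "\<And>n. w n \<ge> 0" and ws: "w summable_on UNIV"
    and F: "\<And>R t. R \<in> {1<..<7} \<Longrightarrow> F (R, t) = (\<Sum>\<^sub>\<infinity>n. a n * exp (\<i> * of_int n * of_real t) * of_real (\<phi> n R))"
  shows "(\<integral>\<^sup>+ x\<in>Omega. ennreal ((cmod (F x))\<^sup>2) \<partial>lborel) \<le> ennreal (2*pi * (\<Sum>\<^sub>\<infinity>n. w n))"
proof -
  define T where "T = (\<lambda>(i::nat) (x::real\<times>real). \<Sum>n\<in>{-int i..int i}. a n * exp (\<i> * of_int n * of_real (snd x)) * of_real (\<phi> n (fst x)))"
  define G where "G = (\<lambda>x. indicator Omega x * (cmod (F x))\<^sup>2)"
  have Fsum: "F (R, t) = T N (R, t)" if R: "R \<in> {1<..<7}" and N: "\<forall>n. n \<notin> {-int N..int N} \<longrightarrow> \<phi> n R = 0" for R t N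
    unfolding F[OF R] T_def using N by (simp, intro infsum_fin) auto
  have Gmeas: "G \<in> borel_measurable (borel \<Otimes>\<^sub>M borel)"
  proof (rule borel_measurable_LIMSEQ_real)
    fix i show "(\<lambda>x. indicator Omega x * (cmod (T i x))\<^sup>2) \<in> borel_measurable (borel \<Otimes>\<^sub>M borel)"
      unfolding T_def using meas_T[OF meas] by simp
  next
    fix x :: "real \<times> real"
    show "(\<lambda>i. indicator Omega x * (cmod (T i x))\<^sup>2) \<longlonglongrightarrow> G x"
    proof (cases "x \<in> Omega")
      case True
      obtain R t where x: "x = (R, t)" by fastforce
      have R: "R \<in> {1<..<7}" using True x by (simp add: Omega_def)
      obtain N where N: "\<forall>n. n \<notin> {-int N..int N} \<longrightarrow> \<phi> n R = 0" using fin[OF R] by blast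
      have "\<forall>\<^sub>F i in sequentially. indicator Omega x * (cmod (T i x))\<^sup>2 = G x"
      proof (rule eventually_sequentiallyI[of N])
        fix i assume "N \<le> i"
        then have "\<forall>n. n \<notin> {-int i..int i} \<longrightarrow> \<phi> n R = 0" using N by auto
        then show "indicator Omega x * (cmod (T i x))\<^sup>2 = G x"
          using Fsum[OF R] by (simp add: G_def x)
      qed
      then show ?thesis by (rule tendsto_eventually)
    next
      case False then show ?thesis by (simp add: G_def)
    qed
  qed
  have "(\<integral>\<^sup>+ x\<in>Omega. ennreal ((cmod (F x))\<^sup>2) \<partial>lborel) = (\<integral>\<^sup>+ x. ennreal (G x) \<partial>lborel)"
    by (intro nn_integral_cong) (simp add: G_def indicator_def)
  also have "\<dots> = (\<integral>\<^sup>+ x. ennreal (G x) \<partial>(lborel \<Otimes>\<^sub>M lborel))" by (simp only: lborel_prod)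
  also have "\<dots> = (\<integral>\<^sup>+ R. \<integral>\<^sup>+ t. ennreal (G (R, t)) \<partial>lborel \<partial>lborel)"
  proof (rule lborel.nn_integral_fst[symmetric])
    have "G \<in> borel_measurable (lborel \<Otimes>\<^sub>M lborel)"
      using Gmeas by (subst measurable_cong_sets[OF sets_pair_measure_cong[OF sets_lborel sets_lborel] refl])
    then show "(\<lambda>x. ennreal (G x)) \<in> borel_measurable (lborel \<Otimes>\<^sub>M lborel)" by measurable
  qed
  also have "\<dots> = (\<integral>\<^sup>+ R. ennreal (2*pi) * (\<Sum>k. ennreal ((cmod (a (int_decode k)))\<^sup>2 * (\<phi> (int_decode k) R)\<^sup>2) * indicator {1<..<7} R) \<partial>lborel)"
  proof (intro nn_integral_cong)
    fix R :: real
    show "(\<integral>\<^sup>+ t. ennreal (G (R, t)) \<partial>lborel) = ennreal (2*pi) * (\<Sum>k. ennreal ((cmod (a (int_decode k)))\<^sup>2 * (\<phi> (int_decode k) R)\<^sup>2) * indicator {1<..<7} R)"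
    proof (cases "R \<in> {1<..<7}")
      case False
      have G0: "\<And>t. G (R, t) = 0" using False by (auto simp: G_def Omega_def)
      have "indicator {1<..<7} R = (0::ennreal)" using False by simp
      then show ?thesis using G0 by simp
    next
      case R: True
      obtain N where N: "\<forall>n. n \<notin> {-int N..int N} \<longrightarrow> \<phi> n R = 0" using fin[OF R] by blast
      define I where "I = {-int N..int N}"
      have ind1: "indicator {1<..<7} R = (1::ennreal)" using R by simp
      have "(\<integral>\<^sup>+ t. ennreal (G (R, t)) \<partial>lborel) = (\<integral>\<^sup>+ t. ennreal ((cmod (\<Sum>n\<in>I. (a n * of_real (\<phi> n R)) * exp (\<i> * of_int n * of_real t)))\<^sup>2) * indicator {0..<2*pi} t \<partial>lborel)"
      proof (intro nn_integral_cong)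
        fix t
        have "F (R, t) = (\<Sum>n\<in>I. (a n * of_real (\<phi> n R)) * exp (\<i> * of_int n * of_real t))"
          unfolding Fsum[OF R N] T_def I_def by (simp only: fst_conv snd_conv) (intro sum.cong refl, simp only: ac_simps)
        moreover have "indicator Omega (R, t) = (indicator {0..<2*pi} t :: real)"
          using R by (simp add: Omega_def indicator_def)
        ultimately show "ennreal (G (R, t)) = ennreal ((cmod (\<Sum>n\<in>I. (a n * of_real (\<phi> n R)) * exp (\<i> * of_int n * of_real t)))\<^sup>2) * indicator {0..<2*pi} t"
          unfolding G_def by (cases "t \<in> {0..<2*pi}") simp_all
      qed
      also have "\<dots> = ennreal (2*pi * (\<Sum>n\<in>I. (cmod (a n * of_real (\<phi> n R)))\<^sup>2))"
        by (rule inner_nn) (simp add: I_def)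
      also have "\<dots> = ennreal (2*pi) * (\<Sum>n\<in>I. ennreal ((cmod (a n))\<^sup>2 * (\<phi> n R)\<^sup>2))"
      proof -
        have e1: "(\<Sum>n\<in>I. (cmod (a n * of_real (\<phi> n R)))\<^sup>2) = (\<Sum>n\<in>I. (cmod (a n))\<^sup>2 * (\<phi> n R)\<^sup>2)"
          by (intro sum.cong refl) (simp add: norm_mult power_mult_distrib)
        have e2: "ennreal (2*pi * (\<Sum>n\<in>I. (cmod (a n))\<^sup>2 * (\<phi> n R)\<^sup>2)) = ennreal (2*pi) * ennreal (\<Sum>n\<in>I. (cmod (a n))\<^sup>2 * (\<phi> n R)\<^sup>2)"
          by (rule ennreal_mult) (auto intro: sum_nonneg)
        have e3: "ennreal (\<Sum>n\<in>I. (cmod (a n))\<^sup>2 * (\<phi> n R)\<^sup>2) = (\<Sum>n\<in>I. ennreal ((cmod (a n))\<^sup>2 * (\<phi> n R)\<^sup>2))"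
          by (rule sum_ennreal[symmetric]) simp
        show ?thesis unfolding e1 e2 e3 ..
      qed
      also have "(\<Sum>n\<in>I. ennreal ((cmod (a n))\<^sup>2 * (\<phi> n R)\<^sup>2)) = (\<Sum>k\<in>int_decode -` I. ennreal ((cmod (a (int_decode k)))\<^sup>2 * (\<phi> (int_decode k) R)\<^sup>2))"
      proof (rule sum.reindex_bij_betw[symmetric])
        show "bij_betw int_decode (int_decode -` I) I"
          using bij_int_decode by (auto simp: bij_betw_def bij_def inj_on_def)
      qed
      also have "\<dots> = (\<Sum>k. ennreal ((cmod (a (int_decode k)))\<^sup>2 * (\<phi> (int_decode k) R)\<^sup>2))"
      proof (rule suminf_finite[symmetric])
        show "finite (int_decode -` I)"
          using bij_int_decode by (intro finite_vimageI) (auto simp: I_def bij_def)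
      qed (use R N in \<open>auto simp: I_def\<close>)
      finally show ?thesis by (simp only: ind1 mult_1_right)
    qed
  qed
  also have "\<dots> = ennreal (2*pi) * (\<Sum>k. \<integral>\<^sup>+ R. ennreal ((cmod (a (int_decode k)))\<^sup>2 * (\<phi> (int_decode k) R)\<^sup>2) * indicator {1<..<7} R \<partial>lborel)"
  proof -
    have gm: "\<And>k. (\<lambda>R. ennreal ((cmod (a (int_decode k)))\<^sup>2 * (\<phi> (int_decode k) R)\<^sup>2) * indicator {1<..<7} R) \<in> borel_measurable lborel"
      using meas by measurable
    have "(\<integral>\<^sup>+ R. ennreal (2*pi) * (\<Sum>k. ennreal ((cmod (a (int_decode k)))\<^sup>2 * (\<phi> (int_decode k) R)\<^sup>2) * indicator {1<..<7} R) \<partial>lborel)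
       = ennreal (2*pi) * (\<integral>\<^sup>+ R. (\<Sum>k. ennreal ((cmod (a (int_decode k)))\<^sup>2 * (\<phi> (int_decode k) R)\<^sup>2) * indicator {1<..<7} R) \<partial>lborel)"
      by (rule nn_integral_cmult, rule borel_measurable_suminf_order, rule gm)
    also have "(\<integral>\<^sup>+ R. (\<Sum>k. ennreal ((cmod (a (int_decode k)))\<^sup>2 * (\<phi> (int_decode k) R)\<^sup>2) * indicator {1<..<7} R) \<partial>lborel)
       = (\<Sum>k. \<integral>\<^sup>+ R. ennreal ((cmod (a (int_decode k)))\<^sup>2 * (\<phi> (int_decode k) R)\<^sup>2) * indicator {1<..<7} R \<partial>lborel)"
      by (rule nn_integral_suminf) (rule gm)
    finally show ?thesis .
  qed
  also have "\<dots> \<le> ennreal (2*pi) * (\<Sum>k. ennreal (w (int_decode k)))"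
  proof (rule mult_left_mono)
    have kb: "(\<integral>\<^sup>+ R. ennreal ((cmod (a (int_decode k)))\<^sup>2 * (\<phi> (int_decode k) R)\<^sup>2) * indicator {1<..<7} R \<partial>lborel) \<le> ennreal (w (int_decode k))" for k
    proof -
      have "(\<integral>\<^sup>+ R. ennreal ((cmod (a (int_decode k)))\<^sup>2 * (\<phi> (int_decode k) R)\<^sup>2) * indicator {1<..<7} R \<partial>lborel)
         = (\<integral>\<^sup>+ R. ennreal ((cmod (a (int_decode k)))\<^sup>2) * (ennreal ((\<phi> (int_decode k) R)\<^sup>2) * indicator {1<..<7} R) \<partial>lborel)"
        by (intro nn_integral_cong) (simp add: ennreal_mult mult.assoc)
      also have "\<dots> = ennreal ((cmod (a (int_decode k)))\<^sup>2) * (\<integral>\<^sup>+ R. ennreal ((\<phi> (int_decode k) R)\<^sup>2) * indicator {1<..<7} R \<partial>lborel)"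
        by (rule nn_integral_cmult) (use meas in measurable)
      also have "\<dots> \<le> ennreal (w (int_decode k))" by (rule bnd)
      finally show ?thesis .
    qed
    show "(\<Sum>k. \<integral>\<^sup>+ R. ennreal ((cmod (a (int_decode k)))\<^sup>2 * (\<phi> (int_decode k) R)\<^sup>2) * indicator {1<..<7} R \<partial>lborel)
        \<le> (\<Sum>k. ennreal (w (int_decode k)))"
      by (rule suminf_le[OF kb summableI summableI])
    show "0 \<le> ennreal (2*pi)" by (rule zero_le)
  qed
  also have "(\<Sum>k. ennreal (w (int_decode k))) = ennreal (\<Sum>\<^sub>\<infinity>n. w n)"
  proof -
    have bij: "bij_betw int_decode UNIV UNIV" using bij_int_decode by (simp add: bij_def)
    have s1: "(\<lambda>k. w (int_decode k)) summable_on UNIV"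
      using ws summable_on_reindex_bij_betw[OF bij, of w] by simp
    have s2: "summable (\<lambda>k. w (int_decode k))"
      using s1 summable_on_UNIV_nonneg_real_iff[of "\<lambda>k. w (int_decode k)"] w0 by simp
    have "(\<lambda>k. w (int_decode k)) sums (\<Sum>\<^sub>\<infinity>k. w (int_decode k))"
      by (rule has_sum_imp_sums) (use s1 in \<open>simp add: has_sum_infsum\<close>)
    then have "(\<Sum>k. w (int_decode k)) = (\<Sum>\<^sub>\<infinity>k. w (int_decode k))" by (rule sums_unique[symmetric])
    also have "\<dots> = (\<Sum>\<^sub>\<infinity>n. w n)" by (rule infsum_reindex_bij_betw[OF bij])
    finally have e: "(\<Sum>k. w (int_decode k)) = (\<Sum>\<^sub>\<infinity>n. w n)" .
    have "(\<Sum>k. ennreal (w (int_decode k))) = ennreal (\<Sum>k. w (int_decode k))"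
      by (rule suminf_ennreal2[OF _ s2]) (rule w0)
    then show ?thesis by (simp only: e)
  qed
  also have "ennreal (2*pi) * ennreal (\<Sum>\<^sub>\<infinity>n. w n) = ennreal (2*pi * (\<Sum>\<^sub>\<infinity>n. w n))"
    by (rule ennreal_mult[symmetric]) (auto intro: infsum_nonneg w0)
  finally show ?thesis .
qed



lemma rho_le:
  assumes R: "R \<in> {1<..<7}" and c: "c = 1 \<or> c = 7"
  shows "0 \<le> rho R" "rho R \<le> \<bar>R - c\<bar>"
proof -
  show "0 \<le> rho R" using R by (simp add: rho_def)
  show "rho R \<le> \<bar>R - c\<bar>"
  proof (cases "c = 1")
    case True
    have "rho R = (R - 1) * ((7 - R) / 6)" by (simp add: rho_def)
    also have "\<dots> \<le> (R - 1) * 1" using R by (intro mult_left_mono) auto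
    also have "\<dots> = \<bar>R - c\<bar>" using R True by simp
    finally show ?thesis .
  next
    case False
    then have c7: "c = 7" using c by simp
    have "rho R = (7 - R) * ((R - 1) / 6)" by (simp add: rho_def)
    also have "\<dots> \<le> (7 - R) * 1" using R by (intro mult_left_mono) auto
    also have "\<dots> = \<bar>R - c\<bar>" using R c7 by simp
    finally show ?thesis .
  qed
qed

lemma coef_bound:
  fixes chi :: "real \<Rightarrow> real"
  assumes zero: "\<And>s. \<bar>s\<bar> > 1 \<Longrightarrow> chi s = 0"
    and Mb: "\<And>s. \<bar>(deriv ^^ m) chi s\<bar> \<le> M"
    and c: "c = 1 \<or> c = 7" and s0: "s \<ge> 0"
    and e: "2 * real (j + m) - 2 * real p - 1 \<le> 2 * s"
  shows "ennreal ((cmod ((\<i> * of_int n) ^ j * bb))\<^sup>2) *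
     (\<integral>\<^sup>+ R. ennreal ((rho R ^ p * ((1 + \<bar>real_of_int n\<bar>) ^ m * (deriv ^^ m) chi ((1 + \<bar>real_of_int n\<bar>) * (R - c))))\<^sup>2)
        * indicator {1<..<7} R \<partial>lborel)
     \<le> ennreal (2 * M\<^sup>2 * 2 powr s * ((1 + (real_of_int n)\<^sup>2) powr s * (cmod bb)\<^sup>2))"
proof -
  define K where "K = 1 + \<bar>real_of_int n\<bar>"
  have K1: "K \<ge> 1" by (simp add: K_def)
  have M0: "M \<ge> 0" using Mb[of 0] by linarith
  define B where "B = M\<^sup>2 * K ^ (2*m) * (1/K) ^ (2*p)"
  have pt: "ennreal ((rho R ^ p * (K ^ m * (deriv ^^ m) chi (K * (R - c))))\<^sup>2) * indicator {1<..<7} R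
      \<le> ennreal B * indicator {c - 1/K..c + 1/K} R" for R
  proof (cases "R \<in> {1<..<7} \<and> (deriv ^^ m) chi (K * (R - c)) \<noteq> 0")
    case False then show ?thesis by (auto simp: indicator_def)
  next
    case True
    then have R: "R \<in> {1<..<7}" and D: "(deriv ^^ m) chi (K * (R - c)) \<noteq> 0" by auto
    have "\<bar>K * (R - c)\<bar> \<le> 1" using Dzero[OF zero] D by force
    then have "K * \<bar>R - c\<bar> \<le> 1" using K1 by (simp only: abs_mult abs_of_nonneg)
    then have RK: "\<bar>R - c\<bar> \<le> 1/K" using K1 by (simp add: field_simps)
    then have "R \<in> {c - 1/K..c + 1/K}" by auto
    have r0: "0 \<le> rho R" and r1: "rho R \<le> 1/K" using rho_le[OF R c] RK by auto
    have "rho R ^ p \<le> (1/K) ^ p" by (rule power_mono[OF r1 r0])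
    then have a1: "(rho R ^ p)\<^sup>2 \<le> ((1/K) ^ p)\<^sup>2" by (rule power_mono) (simp add: r0)
    have a2: "((deriv ^^ m) chi (K * (R - c)))\<^sup>2 \<le> M\<^sup>2"
      using Mb[of "K * (R - c)"] by (metis abs_le_square_iff abs_of_nonneg M0)
    have "(rho R ^ p * (K ^ m * (deriv ^^ m) chi (K * (R - c))))\<^sup>2
        = (rho R ^ p)\<^sup>2 * (K ^ m)\<^sup>2 * ((deriv ^^ m) chi (K * (R - c)))\<^sup>2" by (simp add: power_mult_distrib)
    also have "\<dots> \<le> ((1/K) ^ p)\<^sup>2 * (K ^ m)\<^sup>2 * M\<^sup>2"
      using a1 a2 by (intro mult_mono) auto
    also have "\<dots> = B" by (simp add: B_def power_mult[symmetric] power_mult_distrib mult.commute)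
    finally show ?thesis using R \<open>R \<in> {c - 1/K..c + 1/K}\<close> by (simp add: indicator_def ennreal_leI)
  qed
  have "(\<integral>\<^sup>+ R. ennreal ((rho R ^ p * (K ^ m * (deriv ^^ m) chi (K * (R - c))))\<^sup>2) * indicator {1<..<7} R \<partial>lborel)
      \<le> (\<integral>\<^sup>+ R. ennreal B * indicator {c - 1/K..c + 1/K} R \<partial>lborel)"
    by (rule nn_integral_mono) (rule pt)
  also have "\<dots> = ennreal B * ennreal (2/K)"
    using K1 by (simp add: nn_integral_cmult_indicator)
  also have "\<dots> = ennreal (B * (2/K))"
    using K1 by (intro ennreal_mult[symmetric]) (auto simp: B_def)
  finally have I: "(\<integral>\<^sup>+ R. ennreal ((rho R ^ p * (K ^ m * (deriv ^^ m) chi (K * (R - c))))\<^sup>2) * indicator {1<..<7} R \<partial>lborel)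
      \<le> ennreal (B * (2/K))"
    .
  have aa: "(cmod ((\<i> * of_int n) ^ j * bb))\<^sup>2 \<le> K ^ (2*j) * (cmod bb)\<^sup>2"
  proof -
    have "(cmod ((\<i> * of_int n) ^ j * bb))\<^sup>2 = (\<bar>real_of_int n\<bar> ^ j)\<^sup>2 * (cmod bb)\<^sup>2"
      by (simp add: norm_mult norm_power power_mult_distrib)
    also have "\<dots> \<le> (K ^ j)\<^sup>2 * (cmod bb)\<^sup>2"
      by (intro mult_right_mono power_mono) (auto simp: K_def)
    finally show ?thesis by (simp add: power_mult[symmetric] mult.commute)
  qed
  have "ennreal ((cmod ((\<i> * of_int n) ^ j * bb))\<^sup>2) * (\<integral>\<^sup>+ R. ennreal ((rho R ^ p * (K ^ m * (deriv ^^ m) chi (K * (R - c))))\<^sup>2) * indicator {1<..<7} R \<partial>lborel)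
      \<le> ennreal (K ^ (2*j) * (cmod bb)\<^sup>2) * ennreal (B * (2/K))"
    using aa I by (intro mult_mono) auto
  also have "\<dots> = ennreal (K ^ (2*j) * (cmod bb)\<^sup>2 * (B * (2/K)))"
    using K1 by (intro ennreal_mult[symmetric]) (auto simp: B_def)
  also have "\<dots> \<le> ennreal (2 * M\<^sup>2 * 2 powr s * ((1 + (real_of_int n)\<^sup>2) powr s * (cmod bb)\<^sup>2))"
  proof (intro ennreal_leI)
    define E where "E = K ^ (2*j) * K ^ (2*m) * (1/K) ^ (2*p) * (1/K)"
    have h: "2/K = 2 * (1/K)" by simp
    have eq: "K ^ (2*j) * (cmod bb)\<^sup>2 * (B * (2/K)) = (2 * M\<^sup>2 * (cmod bb)\<^sup>2) * E"
      unfolding B_def E_def by (subst h) (simp only: ac_simps)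
    have "K powr (2 * real (j + m) - 2 * real p - 1) = K powr (real (2*j)) * K powr (real (2*m)) / K powr (real (2*p)) / K powr 1"
      using K1 by (simp add: powr_diff powr_add algebra_simps)
    also have "\<dots> = K ^ (2*j) * K ^ (2*m) / K ^ (2*p) / K"
      using K1 by (simp only: powr_realpow powr_one)
    also have "\<dots> = E" by (simp add: E_def power_one_over divide_inverse power_inverse)
    finally have E1: "E = K powr (2 * real (j + m) - 2 * real p - 1)" by simp
    have "K powr (2 * real (j + m) - 2 * real p - 1) \<le> K powr (2 * s)" using K1 e by (intro powr_mono) auto
    also have "K powr (2 * s) = (K\<^sup>2) powr s"
    proof -
      have "(K\<^sup>2) powr s = (K powr 2) powr s" using K1 by (simp add: powr_numeral)
      also have "\<dots> = K powr (2 * s)" by (simp add: powr_powr)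
      finally show ?thesis by simp
    qed
    also have "(K\<^sup>2) powr s \<le> (2 * (1 + (real_of_int n)\<^sup>2)) powr s"
    proof (rule powr_mono2[OF s0])
      show "0 \<le> K\<^sup>2" by simp
      have "K\<^sup>2 = 1 + 2*\<bar>real_of_int n\<bar> + (real_of_int n)\<^sup>2" unfolding K_def by (simp add: power2_eq_square algebra_simps)
      moreover have "2*\<bar>real_of_int n\<bar> \<le> 1 + (real_of_int n)\<^sup>2" using sum_squares_bound[of 1 "\<bar>real_of_int n\<bar>"] by simp
      ultimately show "K\<^sup>2 \<le> 2 * (1 + (real_of_int n)\<^sup>2)" by simp
    qed
    also have "(2 * (1 + (real_of_int n)\<^sup>2)) powr s = 2 powr s * (1 + (real_of_int n)\<^sup>2) powr s" by (rule powr_mult)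
    finally have E2: "E \<le> 2 powr s * (1 + (real_of_int n)\<^sup>2) powr s" unfolding E1 .
    have "(2 * M\<^sup>2 * (cmod bb)\<^sup>2) * E \<le> (2 * M\<^sup>2 * (cmod bb)\<^sup>2) * (2 powr s * (1 + (real_of_int n)\<^sup>2) powr s)"
      by (rule mult_left_mono[OF E2]) simp
    also have "\<dots> = 2 * M\<^sup>2 * 2 powr s * ((1 + (real_of_int n)\<^sup>2) powr s * (cmod bb)\<^sup>2)" by (simp only: ac_simps)
    finally show "K ^ (2*j) * (cmod bb)\<^sup>2 * (B * (2/K)) \<le> 2 * M\<^sup>2 * 2 powr s * ((1 + (real_of_int n)\<^sup>2) powr s * (cmod bb)\<^sup>2)"
      unfolding eq .
  qed
  finally show ?thesis by (simp only: K_def)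
qed



lemma L2bound:
  assumes I: "(\<integral>\<^sup>+ x\<in>Omega. ennreal ((cmod (f x))\<^sup>2) \<partial>lborel) \<le> ennreal (A * S)"
    and A: "0 \<le> A" and S: "0 \<le> S"
  shows "L2norm f \<le> ennreal (sqrt A * sqrt S)"
proof -
  define J where "J = (\<integral>\<^sup>+ x\<in>Omega. ennreal ((cmod (f x))\<^sup>2) \<partial>lborel)"
  have J: "J \<le> ennreal (A * S)" using I by (simp add: J_def)
  have "ennreal (A * S) < \<infinity>" by simp
  with J have "J < \<infinity>" by (rule le_less_trans)
  then have Jn: "J \<noteq> \<infinity>" by simp
  have "enn2real J \<le> enn2real (ennreal (A * S))" by (rule enn2real_mono[OF J]) simp
  then have "enn2real J \<le> A * S" using A S by simp
  then have "sqrt (enn2real J) \<le> sqrt (A * S)" by (rule real_sqrt_le_mono)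
  also have "\<dots> = sqrt A * sqrt S" by (rule real_sqrt_mult)
  finally have sq: "sqrt (enn2real J) \<le> sqrt A * sqrt S" .
  have "L2norm f = ennreal (sqrt (enn2real J))"
    unfolding L2norm_def Let_def J_def[symmetric] using Jn by (simp only: if_False)
  then show ?thesis using sq by (simp add: ennreal_leI)
qed


lemma D_meas:
  fixes chi :: "real \<Rightarrow> real"
  assumes smooth: "\<And>m x. ((deriv ^^ m) chi) differentiable (at x)"
  shows "(deriv ^^ m) chi \<in> borel_measurable borel"
proof (rule borel_measurable_continuous_onI)
  show "continuous_on UNIV ((deriv ^^ m) chi)"
    using smooth by (meson continuous_at_imp_continuous_on differentiable_imp_continuous_within)
qed

lemma phi_meas:
  fixes chi :: "real \<Rightarrow> real"
  assumes smooth: "\<And>m x. ((deriv ^^ m) chi) differentiable (at x)"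
  shows "(\<lambda>R. rho R ^ p * ((1 + \<bar>real_of_int n\<bar>) ^ m * (deriv ^^ m) chi ((1 + \<bar>real_of_int n\<bar>) * (R - c)))) \<in> borel_measurable borel"
  using D_meas[OF smooth, of m] unfolding rho_def by measurable

lemma phi_fin:
  fixes chi :: "real \<Rightarrow> real"
  assumes zero: "\<And>s. \<bar>s\<bar> > 1 \<Longrightarrow> chi s = 0"
    and c: "c = 1 \<or> c = 7" and R: "R \<in> {1<..<7}"
  shows "\<exists>N::nat. \<forall>n. n \<notin> {-int N..int N} \<longrightarrow>
     rho R ^ p * ((1 + \<bar>real_of_int n\<bar>) ^ m * (deriv ^^ m) chi ((1 + \<bar>real_of_int n\<bar>) * (R - c))) = 0"
proof -
  define d where "d = \<bar>R - c\<bar>"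
  have d: "d > 0" "\<bar>R - c\<bar> \<ge> d" using c R by (auto simp: d_def)
  have "1/d > 0" using d by simp
  then have "0 < real_of_int \<lceil>1/d\<rceil>" using le_of_int_ceiling[of "1/d"] by linarith
  then have c0: "\<lceil>1/d\<rceil> \<ge> 0" by (metis of_int_0_less_iff less_imp_le)
  show ?thesis
  proof (intro exI allI impI)
    fix n assume "n \<notin> {-int (nat \<lceil>1/d\<rceil>)..int (nat \<lceil>1/d\<rceil>)}"
    then have "n \<notin> {-\<lceil>1/d\<rceil>..\<lceil>1/d\<rceil>}" using c0 by simp
    then show "rho R ^ p * ((1 + \<bar>real_of_int n\<bar>) ^ m * (deriv ^^ m) chi ((1 + \<bar>real_of_int n\<bar>) * (R - c))) = 0"
      using supp_zero[OF zero d] by simp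
  qed
qed


lemma main_gen:
  fixes chi :: "real \<Rightarrow> real" and j1 j2 l k :: nat and c :: real
    and sh :: "(real \<Rightarrow> complex) \<Rightarrow> real \<times> real \<Rightarrow> complex"
  assumes smooth: "\<And>m x. ((deriv ^^ m) chi) differentiable (at x)"
    and zero: "\<And>s. \<bar>s\<bar> > 1 \<Longrightarrow> chi s = 0"
    and c: "c = 1 \<or> c = 7"
    and jk: "int j1 + int j2 - int k \<ge> 1"
    and sh: "\<And>b R t. sh b (R, t) = gt chi c (fcoeff b) 0 (R, t)"
  shows "\<exists>C. \<forall>b. in_Hs (real j1 + real j2 - real k - 1/2) b \<longrightarrow>
        L2norm (sh b)
        + L2norm (\<lambda>x. of_real (rho (fst x) ^ (k + l)) * (dTheta ^^ j1) ((dR ^^ (j2 + l)) (sh b)) x)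
        \<le> ennreal (C * Hs_norm (real j1 + real j2 - real k - 1/2) b)"
proof -
  define s where "s = real j1 + real j2 - real k - 1/2"
  define m where "m = j2 + l"
  define p where "p = k + l"
  have "real j1 + real j2 - real k \<ge> 1" using jk by linarith
  then have s0: "s \<ge> 0" by (simp add: s_def)
  obtain M0 where M0: "\<And>x. \<bar>(deriv ^^ 0) chi x\<bar> \<le> M0" using Dbound[OF smooth zero, of 0] by blast
  obtain M1 where M1: "\<And>x. \<bar>(deriv ^^ m) chi x\<bar> \<le> M1" using Dbound[OF smooth zero, of m] by blast
  define A1 where "A1 = 2*pi * (2 * M0\<^sup>2 * 2 powr s)"
  define A2 where "A2 = 2*pi * (2 * M1\<^sup>2 * 2 powr s)"
  have A1: "A1 \<ge> 0" and A2: "A2 \<ge> 0" by (simp_all add: A1_def A2_def)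
  have main: "L2norm (sh b)
        + L2norm (\<lambda>x. of_real (rho (fst x) ^ p) * (dTheta ^^ j1) ((dR ^^ m) (sh b)) x)
        \<le> ennreal ((sqrt A1 + sqrt A2) * Hs_norm s b)" if b: "in_Hs s b" for b
  proof -
    define wb where "wb = (\<lambda>n::int. (1 + (real_of_int n)\<^sup>2) powr s * (cmod (fcoeff b n))\<^sup>2)"
    have wbs: "wb summable_on UNIV" using b by (simp add: in_Hs_def wb_def)
    have wb0: "\<And>n. wb n \<ge> 0" by (simp add: wb_def)
    define S where "S = (\<Sum>\<^sub>\<infinity>n. wb n)"
    have S0: "S \<ge> 0" unfolding S_def by (rule infsum_nonneg) (simp add: wb0)
    have HS: "Hs_norm s b = sqrt S" by (simp add: Hs_norm_def S_def wb_def)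
    have isum: "(\<Sum>\<^sub>\<infinity>n. K * wb n) = K * S" for K by (simp add: S_def infsum_cmult_right')
    have I1: "(\<integral>\<^sup>+ x\<in>Omega. ennreal ((cmod (sh b x))\<^sup>2) \<partial>lborel) \<le> ennreal (A1 * S)"
    proof -
      have "(\<integral>\<^sup>+ x\<in>Omega. ennreal ((cmod (sh b x))\<^sup>2) \<partial>lborel) \<le> ennreal (2*pi * (\<Sum>\<^sub>\<infinity>n. (2 * M0\<^sup>2 * 2 powr s) * wb n))"
      proof (rule parseval_bound[where a="fcoeff b" and
            \<phi>="\<lambda>n R. rho R ^ 0 * ((1 + \<bar>real_of_int n\<bar>) ^ 0 * (deriv ^^ 0) chi ((1 + \<bar>real_of_int n\<bar>) * (R - c)))"])
        show "\<And>n. (\<lambda>R. rho R ^ 0 * ((1 + \<bar>real_of_int n\<bar>) ^ 0 * (deriv ^^ 0) chi ((1 + \<bar>real_of_int n\<bar>) * (R - c)))) \<in> borel_measurable borel"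
          by (rule phi_meas[OF smooth])
        show "\<And>R. R \<in> {1<..<7} \<Longrightarrow> \<exists>N::nat. \<forall>n. n \<notin> {-int N..int N} \<longrightarrow>
            rho R ^ 0 * ((1 + \<bar>real_of_int n\<bar>) ^ 0 * (deriv ^^ 0) chi ((1 + \<bar>real_of_int n\<bar>) * (R - c))) = 0"
          by (rule phi_fin[OF zero c])
        fix n
        show "ennreal ((cmod (fcoeff b n))\<^sup>2) *
            (\<integral>\<^sup>+ R. ennreal ((rho R ^ 0 * ((1 + \<bar>real_of_int n\<bar>) ^ 0 * (deriv ^^ 0) chi ((1 + \<bar>real_of_int n\<bar>) * (R - c))))\<^sup>2) * indicator {1<..<7} R \<partial>lborel)
            \<le> ennreal ((2 * M0\<^sup>2 * 2 powr s) * wb n)"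
        proof -
          have e0: "2 * real (0 + 0) - 2 * real (0::nat) - 1 \<le> 2 * s" using s0 by simp
          show ?thesis
            using coef_bound[OF zero M0 c s0 e0, where n=n and bb="fcoeff b n"]
            by (simp add: wb_def mult.assoc)
        qed
        show "0 \<le> (2 * M0\<^sup>2 * 2 powr s) * wb n" using wb0[of n] by simp
        show "(\<lambda>n. (2 * M0\<^sup>2 * 2 powr s) * wb n) summable_on UNIV"
          by (rule summable_on_cmult_right[OF wbs])
        fix R t
        show "sh b (R, t) = (\<Sum>\<^sub>\<infinity>n. fcoeff b n * exp (\<i> * of_int n * of_real t) *
            of_real (rho R ^ 0 * ((1 + \<bar>real_of_int n\<bar>) ^ 0 * (deriv ^^ 0) chi ((1 + \<bar>real_of_int n\<bar>) * (R - c)))))"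
          by (simp add: sh gt_def)
      qed
      also have "\<dots> = ennreal (A1 * S)" by (simp only: isum) (simp add: A1_def mult_ac)
      finally show ?thesis .
    qed
    have L1: "L2norm (sh b) \<le> ennreal (sqrt A1 * sqrt S)" by (rule L2bound[OF I1 A1 S0])
    have shc: "\<And>(R::real) (t::real). R \<noteq> c \<Longrightarrow> sh b (R, t) = gt chi c (fcoeff b) 0 (R, t)" using sh by simp
    have dRc: "\<And>(R::real) (t::real). R \<noteq> c \<Longrightarrow> (dR ^^ m) (sh b) (R, t) = gt chi c (fcoeff b) m (R, t)"
      by (rule dR_iter[OF smooth zero shc])
    have dform: "\<And>(R::real) (t::real). R \<noteq> c \<Longrightarrow> (dTheta ^^ j1) ((dR ^^ m) (sh b)) (R, t) = gt chi c (\<lambda>n. (\<i> * of_int n) ^ j1 * fcoeff b n) m (R, t)"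
      by (rule dT_iter[OF zero dRc])
    define F2 where "F2 = (\<lambda>x. of_real (rho (fst x) ^ p) * (dTheta ^^ j1) ((dR ^^ m) (sh b)) x)"
    have I2: "(\<integral>\<^sup>+ x\<in>Omega. ennreal ((cmod (F2 x))\<^sup>2) \<partial>lborel) \<le> ennreal (A2 * S)"
    proof -
      have "(\<integral>\<^sup>+ x\<in>Omega. ennreal ((cmod (F2 x))\<^sup>2) \<partial>lborel) \<le> ennreal (2*pi * (\<Sum>\<^sub>\<infinity>n. (2 * M1\<^sup>2 * 2 powr s) * wb n))"
      proof (rule parseval_bound[where a="\<lambda>n. (\<i> * of_int n) ^ j1 * fcoeff b n" and
            \<phi>="\<lambda>n R. rho R ^ p * ((1 + \<bar>real_of_int n\<bar>) ^ m * (deriv ^^ m) chi ((1 + \<bar>real_of_int n\<bar>) * (R - c)))"])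
        show "\<And>n. (\<lambda>R. rho R ^ p * ((1 + \<bar>real_of_int n\<bar>) ^ m * (deriv ^^ m) chi ((1 + \<bar>real_of_int n\<bar>) * (R - c)))) \<in> borel_measurable borel"
          by (rule phi_meas[OF smooth])
        show "\<And>R. R \<in> {1<..<7} \<Longrightarrow> \<exists>N::nat. \<forall>n. n \<notin> {-int N..int N} \<longrightarrow>
            rho R ^ p * ((1 + \<bar>real_of_int n\<bar>) ^ m * (deriv ^^ m) chi ((1 + \<bar>real_of_int n\<bar>) * (R - c))) = 0"
          by (rule phi_fin[OF zero c])
        fix n
        show "ennreal ((cmod ((\<i> * of_int n) ^ j1 * fcoeff b n))\<^sup>2) *
            (\<integral>\<^sup>+ R. ennreal ((rho R ^ p * ((1 + \<bar>real_of_int n\<bar>) ^ m * (deriv ^^ m) chi ((1 + \<bar>real_of_int n\<bar>) * (R - c))))\<^sup>2) * indicator {1<..<7} R \<partial>lborel)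
            \<le> ennreal ((2 * M1\<^sup>2 * 2 powr s) * wb n)"
        proof -
          have e2: "2 * real (j1 + m) - 2 * real p - 1 \<le> 2 * s" by (simp add: s_def m_def p_def)
          show ?thesis
            using coef_bound[OF zero M1 c s0 e2, where n=n and bb="fcoeff b n"]
            by (simp add: wb_def mult.assoc)
        qed
        show "0 \<le> (2 * M1\<^sup>2 * 2 powr s) * wb n" using wb0[of n] by simp
        show "(\<lambda>n. (2 * M1\<^sup>2 * 2 powr s) * wb n) summable_on UNIV"
          by (rule summable_on_cmult_right[OF wbs])
        fix R t :: real assume R: "R \<in> {1<..<7}"
        then have Rc: "R \<noteq> c" using c by auto
        have "F2 (R, t) = of_real (rho R ^ p) * gt chi c (\<lambda>n. (\<i> * of_int n) ^ j1 * fcoeff b n) m (R, t)"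
          by (simp add: F2_def dform[OF Rc])
        also have "\<dots> = (\<Sum>\<^sub>\<infinity>n. of_real (rho R ^ p) * ((\<i> * of_int n) ^ j1 * fcoeff b n * exp (\<i> * of_int n * of_real t) *
            of_real ((1 + \<bar>real_of_int n\<bar>) ^ m * (deriv ^^ m) chi ((1 + \<bar>real_of_int n\<bar>) * (R - c)))))"
          by (simp add: gt_def infsum_cmult_right')
        also have "\<dots> = (\<Sum>\<^sub>\<infinity>n. (\<i> * of_int n) ^ j1 * fcoeff b n * exp (\<i> * of_int n * of_real t) *
            of_real (rho R ^ p * ((1 + \<bar>real_of_int n\<bar>) ^ m * (deriv ^^ m) chi ((1 + \<bar>real_of_int n\<bar>) * (R - c)))))"
          by (intro infsum_cong) (simp only: of_real_mult mult_ac)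
        finally show "F2 (R, t) = \<dots>" .
      qed
      also have "\<dots> = ennreal (A2 * S)" by (simp only: isum) (simp add: A2_def mult_ac)
      finally show ?thesis .
    qed
    have L2: "L2norm F2 \<le> ennreal (sqrt A2 * sqrt S)" by (rule L2bound[OF I2 A2 S0])
    have "L2norm (sh b) + L2norm F2 \<le> ennreal (sqrt A1 * sqrt S) + ennreal (sqrt A2 * sqrt S)"
      by (rule add_mono[OF L1 L2])
    also have "\<dots> = ennreal (sqrt A1 * sqrt S + sqrt A2 * sqrt S)"
      by (rule ennreal_plus[symmetric]) (simp_all add: A1 A2 S0)
    also have "ennreal (sqrt A1 * sqrt S + sqrt A2 * sqrt S) = ennreal ((sqrt A1 + sqrt A2) * Hs_norm s b)"
      unfolding HS by (simp only: distrib_right)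
    finally show ?thesis unfolding F2_def .
  qed
  have main': "\<And>b. in_Hs (real j1 + real j2 - real k - 1/2) b \<Longrightarrow> L2norm (sh b)
        + L2norm (\<lambda>x. of_real (rho (fst x) ^ (k + l)) * (dTheta ^^ j1) ((dR ^^ (j2 + l)) (sh b)) x)
        \<le> ennreal ((sqrt A1 + sqrt A2) * Hs_norm (real j1 + real j2 - real k - 1/2) b)"
    using main unfolding s_def m_def p_def .
  show ?thesis by (intro exI[of _ "sqrt A1 + sqrt A2"] allI impI main')
qed


theorem lemma4p1:
  fixes chi :: "real \<Rightarrow> real" and j1 j2 l k :: nat
  assumes smooth: "\<And>m x. ((deriv ^^ m) chi) differentiable (at x)"
    and even: "\<And>s. chi (- s) = chi s"
    and one: "\<And>s. \<bar>s\<bar> < 1/2 \<Longrightarrow> chi s = 1"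
    and zero: "\<And>s. \<bar>s\<bar> > 1 \<Longrightarrow> chi s = 0"
    and jk: "int j1 + int j2 - int k \<ge> 1"
  shows
    "(\<exists>C. \<forall>b. in_Hs (real j1 + real j2 - real k - 1/2) b \<longrightarrow>
        L2norm (bsharp chi b)
        + L2norm (\<lambda>x. of_real (rho (fst x) ^ (k + l)) * (dTheta ^^ j1) ((dR ^^ (j2 + l)) (bsharp chi b)) x)
        \<le> ennreal (C * Hs_norm (real j1 + real j2 - real k - 1/2) b))
   \<and> (\<exists>C. \<forall>B. in_Hs (real j1 + real j2 - real k - 1/2) B \<longrightarrow>
        L2norm (Bflat chi B)
        + L2norm (\<lambda>x. of_real (rho (fst x) ^ (k + l)) * (dTheta ^^ j1) ((dR ^^ (j2 + l)) (Bflat chi B)) x)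
        \<le> ennreal (C * Hs_norm (real j1 + real j2 - real k - 1/2) B))"
  proof
  show "\<exists>C. \<forall>b. in_Hs (real j1 + real j2 - real k - 1/2) b \<longrightarrow>
        L2norm (bsharp chi b)
        + L2norm (\<lambda>x. of_real (rho (fst x) ^ (k + l)) * (dTheta ^^ j1) ((dR ^^ (j2 + l)) (bsharp chi b)) x)
        \<le> ennreal (C * Hs_norm (real j1 + real j2 - real k - 1/2) b)"
    by (rule main_gen[OF smooth zero _ jk]) (simp_all add: bsharp_def gt_def)
  show "\<exists>C. \<forall>B. in_Hs (real j1 + real j2 - real k - 1/2) B \<longrightarrow>
        L2norm (Bflat chi B)
        + L2norm (\<lambda>x. of_real (rho (fst x) ^ (k + l)) * (dTheta ^^ j1) ((dR ^^ (j2 + l)) (Bflat chi B)) x)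
        \<le> ennreal (C * Hs_norm (real j1 + real j2 - real k - 1/2) B)"
    by (rule main_gen[OF smooth zero _ jk]) (simp_all add: Bflat_def gt_def)
qed

end
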